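(* Let $\sigma$ be a reflection on a lattice $L$, regarded also as a reflection on the torus $T=\mathrm{T}(1)\otimes L=(\mathbb{R}\otimes L)/L$. Then sending $b\in L$ to the residue class of $b/2$ in $T$ gives a bijection between markings $\pm(b,\beta)$ of $\sigma$ (on $L$) and elements $h\in T$ which are markings of $\sigma$ (on $T$).
   Context: A lattice is a free abelian group of finite rank. A reflection on $L$ is an automorphism conjugate in $GL(r,\mathbb{Q})$ to $\mathrm{diag}(-1,1,\dots,1)$. A strict marking of $\sigma$ on $L$ is a pair $(b,\beta)$ with $b\in L$, $\beta:L\to\mathbb{Z}$ a homomorphism, and $\sigma(x)=x+\beta(x)b$ for all $x\in L$; a marking is an equivalence class $\pm(b,\beta)$ of strict markings up to sign. On $T$ (written additively), $\sigma$ is trivial mod $2$ if it fixes every $x\in T$ with $2x=0$, and a marking of $\sigma$ is an element $h\in T$ lying in the identity component of $\{x\in T:\sigma(x)=-x\}$ (equivalently $h\in\mathrm{T}(1)\otimes\ker(1+\sigma)$), with $2h=0$, and with $h\neq0$ if $\sigma$ is nontrivial mod $2$. *)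

theory Defs
  imports "HOL-Analysis.Analysis"
begin

text \<open>The lattice L is modelled as int^'n (any lattice of rank r is isomorphic to Z^r);
  the rank is CARD('n). Automorphisms of L are integer matrices acting by *v.\<close>

definition rat_of_imat :: "int^'n^'n \<Rightarrow> rat^'n^'n" where
  "rat_of_imat A = (\<chi> i j. of_int (A$i$j))"

definition real_of_imat :: "int^'n^'n \<Rightarrow> real^'n^'n" where
  "real_of_imat A = (\<chi> i j. real_of_int (A$i$j))"

definition real_of_ivec :: "int^'n \<Rightarrow> real^'n" where
  "real_of_ivec x = (\<chi> i. real_of_int (x$i))"

definition lat_reflection :: "int^'n^'n \<Rightarrow> bool" where
  "lat_reflection \<sigma> \<longleftrightarrow>
     (\<exists>\<tau>. \<sigma> ** \<tau> = mat 1 \<and> \<tau> ** \<sigma> = mat 1) \<and>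
     (\<exists>(P::rat^'n^'n) (Q::rat^'n^'n) k. P ** Q = mat 1 \<and> Q ** P = mat 1 \<and>
        P ** rat_of_imat \<sigma> ** Q = (\<chi> i j. if i = j then (if i = k then -1 else 1) else 0))"

definition strict_marking :: "int^'n^'n \<Rightarrow> int^'n \<Rightarrow> (int^'n \<Rightarrow> int) \<Rightarrow> bool" where
  "strict_marking \<sigma> b \<beta> \<longleftrightarrow>
     (\<forall>x y. \<beta> (x + y) = \<beta> x + \<beta> y) \<and> (\<forall>x. \<sigma> *v x = x + \<beta> x *s b)"

definition lat_marking :: "int^'n^'n \<Rightarrow> ((int^'n) \<times> ((int^'n) \<Rightarrow> int)) set \<Rightarrow> bool" where
  "lat_marking \<sigma> m \<longleftrightarrow>
     (\<exists>b \<beta>. strict_marking \<sigma> b \<beta> \<and> m = {(b, \<beta>), (-b, \<lambda>x. - \<beta> x)})"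

text \<open>The torus T = (R tensor L)/L = R^n / Z^n; an element is the residue class of a real vector.\<close>
definition tcls :: "real^'n \<Rightarrow> (real^'n) set" where
  "tcls v = {w. \<forall>i. w$i - v$i \<in> \<int>}"

definition trivial_mod2 :: "int^'n^'n \<Rightarrow> bool" where
  "trivial_mod2 \<sigma> \<longleftrightarrow>
     (\<forall>v::real^'n. (\<forall>i. 2 * v$i \<in> \<int>) \<longrightarrow> (\<forall>i. (real_of_imat \<sigma> *v v)$i - v$i \<in> \<int>))"

text \<open>Marking of sigma on T: h in the image of T(1) tensor ker(1+sigma), i.e. the class of a
  vector in the real span of the sublattice ker(1+sigma) of L; with 2h = 0, and h \<noteq> 0
  if sigma is nontrivial mod 2.\<close>
definition torus_marking :: "int^'n^'n \<Rightarrow> (real^'n) set \<Rightarrow> bool" where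
  "torus_marking \<sigma> h \<longleftrightarrow>
     (\<exists>v. h = tcls v \<and>
        v \<in> span (real_of_ivec ` {z. \<sigma> *v z = - z}) \<and>
        (\<forall>i. 2 * v$i \<in> \<int>) \<and>
        (\<not> trivial_mod2 \<sigma> \<longrightarrow> (\<exists>i. v$i \<notin> \<int>)))"

end

theory Submission
  imports Defs
begin


lemma rat_of_imat_mult: "rat_of_imat (A ** B) = rat_of_imat A ** rat_of_imat B"
  by (simp add: rat_of_imat_def matrix_matrix_mult_def vec_eq_iff)

lemma rat_of_imat_one: "rat_of_imat (mat 1) = mat 1"
  by (simp add: rat_of_imat_def mat_def vec_eq_iff)

lemma rat_of_imat_inj: "rat_of_imat A = rat_of_imat B \<Longrightarrow> A = B"
  by (simp add: rat_of_imat_def vec_eq_iff)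

lemma refl_facts:
  fixes \<sigma> :: "int^'n^'n"
  assumes "lat_reflection \<sigma>"
  shows "\<sigma> ** \<sigma> = mat 1 \<and> \<sigma> \<noteq> mat 1 \<and>
    (\<exists>u w::rat^'n. \<forall>i j. of_int (\<sigma>$i$j) - (if i=j then 1 else 0) = u$i * w$j)"
proof -
  obtain P Q :: "rat^'n^'n" and k where PQ: "P ** Q = mat 1" "Q ** P = mat 1"
    and PD: "P ** rat_of_imat \<sigma> ** Q = (\<chi> i j. if i = j then (if i = k then -1 else 1) else 0)"
    using assms unfolding lat_reflection_def by blast
  define D :: "rat^'n^'n" where "D = (\<chi> i j. if i = j then (if i = k then -1 else 1) else 0)"
  define S where "S = rat_of_imat \<sigma>"
  have "Q ** (P ** S ** Q) ** P = (Q ** P) ** S ** (Q ** P)"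
    by (simp add: matrix_mul_assoc)
  hence S: "S = Q ** D ** P" using PD PQ by (simp add: D_def S_def)
  define d :: "'n \<Rightarrow> rat" where "d = (\<lambda>i. if i = k then -1 else 1)"
  have Dd: "D = (\<chi> i j. if i = j then d i else 0)" by (simp add: D_def d_def vec_eq_iff)
  have dd: "d i * d i = 1" for i by (simp add: d_def)
  have DD: "D ** D = mat 1"
  proof -
    have "(\<Sum>l\<in>UNIV. (if i = l then d i else 0) * (if l = j then d l else 0)) = (if i = j then 1 else 0)" for i j
    proof -
      have "(\<Sum>l\<in>UNIV. (if i = l then d i else 0) * (if l = j then d l else 0))
          = (\<Sum>l\<in>UNIV. if l = i then d i * (if i = j then d i else 0) else 0)"
        by (intro sum.cong) auto
      thus ?thesis by (simp add: dd)
    qed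
    thus ?thesis unfolding Dd by (simp add: matrix_matrix_mult_def mat_def vec_eq_iff)
  qed
  have "S ** S = Q ** (D ** (P ** Q) ** D) ** P" using S by (simp add: matrix_mul_assoc)
  also have "\<dots> = mat 1" using PQ DD by (simp add: matrix_mul_assoc)
  finally have SS: "S ** S = mat 1" .
  have 1: "\<sigma> ** \<sigma> = mat 1"
    using SS by (intro rat_of_imat_inj) (simp add: rat_of_imat_mult rat_of_imat_one S_def)
  have 2: "\<sigma> \<noteq> mat 1"
  proof
    assume "\<sigma> = mat 1"
    hence "D = mat 1" using PD PQ by (simp add: D_def rat_of_imat_one)
    hence "D$k$k = 1" by (simp add: mat_def)
    thus False by (simp add: D_def)
  qed
  have 3: "of_int (\<sigma>$i$j) - (if i=j then 1 else 0) = (-2 * Q$i$k) * P$k$j" for i j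
  proof -
    have QD: "(Q ** D)$i$l = Q$i$l * d l" for l
    proof -
      have "(Q ** D)$i$l = (\<Sum>m\<in>UNIV. Q$i$m * (if m = l then d m else 0))"
        unfolding Dd matrix_matrix_mult_def by simp
      also have "\<dots> = (\<Sum>m\<in>UNIV. if m = l then Q$i$l * d l else 0)"
        by (intro sum.cong) auto
      finally show ?thesis by simp
    qed
    have "of_int (\<sigma>$i$j) = S$i$j" by (simp add: S_def rat_of_imat_def)
    also have "\<dots> = (\<Sum>l\<in>UNIV. Q$i$l * d l * P$l$j)"
      unfolding S matrix_matrix_mult_def[of "Q ** D" P] by (simp add: QD)
    also have "\<dots> = (\<Sum>l\<in>UNIV. Q$i$l * (if l = k then -1 else 1) * P$l$j)"
      by (simp add: d_def)
    finally have "of_int (\<sigma>$i$j) = (\<Sum>l\<in>UNIV. Q$i$l * (if l = k then -1 else 1) * P$l$j)" .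
    also have "\<dots> = (\<Sum>l\<in>UNIV. Q$i$l * P$l$j - (if l = k then 2 * Q$i$l * P$l$j else 0))"
      by (intro sum.cong) auto
    also have "\<dots> = (Q ** P)$i$j - 2 * Q$i$k * P$k$j"
      by (simp add: sum_subtractf matrix_matrix_mult_def)
    finally show ?thesis using PQ by (simp add: mat_def)
  qed
  have "\<forall>i j. of_int (\<sigma>$i$j) - (if i=j then 1 else 0) = (\<chi> i. -2 * Q$i$k)$i * (\<chi> j. P$k$j)$j"
    using 3 by simp
  then show ?thesis using 1 2 by blast
qed



definition dotv :: "int^'n \<Rightarrow> int^'n \<Rightarrow> int" where
  "dotv y x = (\<Sum>i\<in>UNIV. y$i * x$i)"

lemma sd1: fixes f :: "'b::finite \<Rightarrow> 'a::semiring_1" shows "(\<Sum>k\<in>UNIV. f k * (if k = j then 1 else (0::'a::semiring_1))) = f j"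
proof -
  have "(\<Sum>k\<in>UNIV. f k * (if k = j then 1 else (0::'a))) = (\<Sum>k\<in>UNIV. if k = j then f k else 0)"
    by (intro sum.cong) auto
  thus ?thesis by simp
qed

lemma sd2: fixes f :: "'b::finite \<Rightarrow> 'a::semiring_1" shows "(\<Sum>k\<in>UNIV. f k * (if j = k then 1 else (0::'a::semiring_1))) = f j"
proof -
  have "(\<Sum>k\<in>UNIV. f k * (if j = k then 1 else (0::'a))) = (\<Sum>k\<in>UNIV. if k = j then f k else 0)"
    by (intro sum.cong) auto
  thus ?thesis by simp
qed

lemma ofi: "real_of_int (if P then 1 else 0) = (if P then 1 else 0)" by simp

lemma mv_smult: "A *v (c *s x) = (c::'a::comm_semiring_1) *s (A *v x)"
  by (simp add: vec_eq_iff matrix_vector_mult_def sum_distrib_left algebra_simps)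

lemma sigma_entry:
  assumes "strict_marking \<sigma> b \<beta>"
  shows "\<sigma>$i$j = (if i = j then 1 else 0) + \<beta> (axis j 1) * b$i"
proof -
  have "(\<sigma> *v axis j 1)$i = \<sigma>$i$j"
  proof -
    show ?thesis by (simp add: matrix_vector_mult_def axis_def sd1)
  qed
  moreover have "\<sigma> *v axis j 1 = axis j 1 + \<beta> (axis j 1) *s b"
    using assms by (simp add: strict_marking_def)
  ultimately show ?thesis by (simp add: axis_def)
qed

lemma sigma_mult_int:
  assumes "strict_marking \<sigma> b \<beta>"
  shows "(\<sigma> *v x)$i = x$i + b$i * (\<Sum>j\<in>UNIV. \<beta> (axis j 1) * x$j)"
proof -
  have "(\<sigma> *v x)$i = (\<Sum>j\<in>UNIV. x$j * (if i = j then 1 else 0) + b$i * (\<beta> (axis j 1) * x$j))"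
    unfolding matrix_vector_mult_def using sigma_entry[OF assms]
    by (simp add: algebra_simps)
  also have "\<dots> = x$i + b$i * (\<Sum>j\<in>UNIV. \<beta> (axis j 1) * x$j)"
    by (simp only: sum.distrib sum_distrib_left sd2)
  finally show ?thesis .
qed

lemma sigma_mult_real:
  assumes "strict_marking \<sigma> b \<beta>"
  shows "(real_of_imat \<sigma> *v v)$i = v$i + of_int (b$i) * (\<Sum>j\<in>UNIV. of_int (\<beta> (axis j 1)) * v$j)"
proof -
  have "(real_of_imat \<sigma> *v v)$i = (\<Sum>j\<in>UNIV. v$j * (if i = j then 1 else 0) + of_int (b$i) * (of_int (\<beta> (axis j 1)) * v$j))"
    unfolding matrix_vector_mult_def real_of_imat_def using sigma_entry[OF assms]
    by (simp add: algebra_simps ofi del: of_int_eq_1_iff)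
  also have "\<dots> = v$i + of_int (b$i) * (\<Sum>j\<in>UNIV. of_int (\<beta> (axis j 1)) * v$j)"
    by (simp only: sum.distrib sum_distrib_left sd2)
  finally show ?thesis .
qed

lemma beta_formula:
  assumes "strict_marking \<sigma> b \<beta>" "b$i \<noteq> 0"
  shows "\<beta> x = (\<Sum>j\<in>UNIV. \<beta> (axis j 1) * x$j)"
proof -
  have "(\<sigma> *v x)$i = x$i + \<beta> x * b$i" using assms(1) by (simp add: strict_marking_def)
  moreover have "(\<sigma> *v x)$i = x$i + b$i * (\<Sum>j\<in>UNIV. \<beta> (axis j 1) * x$j)"
    using sigma_mult_int[OF assms(1), of x i] .
  ultimately have "b$i * \<beta> x = b$i * (\<Sum>j\<in>UNIV. \<beta> (axis j 1) * x$j)"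
    by (metis add_left_cancel mult.commute)
  thus ?thesis using assms(2) by (metis mult_left_cancel)
qed

lemma marking_basic:
  assumes "\<sigma> ** \<sigma> = mat 1" "\<sigma> \<noteq> mat 1" "strict_marking \<sigma> b \<beta>"
  shows "\<sigma> *v b = - b" "\<beta> b = -2" "b \<noteq> 0"
proof -
  have sx: "\<sigma> *v x = x + \<beta> x *s b" for x using assms(3) by (simp add: strict_marking_def)
  have ex: "b \<noteq> 0 \<and> (\<exists>x. \<beta> x \<noteq> 0)"
  proof (rule ccontr)
    assume "\<not> ?thesis"
    hence "\<forall>x. \<sigma> *v x = mat 1 *v x" using sx by auto
    hence "\<sigma> = mat 1" using matrix_eq by blast
    thus False using assms(2) by simp
  qed
  then obtain x where x: "\<beta> x \<noteq> 0" by blast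
  from ex obtain i where i: "b$i \<noteq> 0" by (metis vec_eq_iff zero_index)
  have "x = \<sigma> *v (\<sigma> *v x)" using assms(1) by (simp add: matrix_vector_mul_assoc)
  also have "\<dots> = \<sigma> *v x + \<beta> x *s (\<sigma> *v b)"
    by (simp add: sx[of x] matrix_vector_right_distrib mv_smult)
  also have "\<dots> = x + \<beta> x *s b + \<beta> x *s (b + \<beta> b *s b)" by (simp add: sx)
  finally have "x$i = (x + \<beta> x *s b + \<beta> x *s (b + \<beta> b *s b))$i" by (rule arg_cong)
  hence "0 = \<beta> x * b$i + \<beta> x * (b$i + \<beta> b * b$i)"
    by (simp only: vector_add_component vector_smult_component)
  also have "\<dots> = \<beta> x * (b$i * (2 + \<beta> b))" by (simp add: algebra_simps)
  finally have "\<beta> x * (b$i * (2 + \<beta> b)) = 0" by simp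
  thus "\<beta> b = -2" using x i by simp
  thus "\<sigma> *v b = - b" using sx[of b] by (simp add: vec_eq_iff)
  show "b \<noteq> 0" using ex by simp
qed



lemma ref_marking:
  fixes \<sigma> :: "int^'n^'n"
  assumes "lat_reflection \<sigma>"
  shows "\<exists>p \<beta>0 y. strict_marking \<sigma> p \<beta>0 \<and> dotv y p = 1"
proof -
  from refl_facts[OF assms] obtain u w :: "rat^'n" where sne: "\<sigma> \<noteq> mat 1"
    and uw: "\<And>i j. of_int (\<sigma>$i$j) - (if i=j then 1 else 0) = u$i * w$j" by blast
  define M where "M i j = \<sigma>$i$j - (if i = j then 1 else 0)" for i j
  have Muw: "rat_of_int (M i j) = u$i * w$j" for i j using uw[of i j] by (cases "i = j") (simp_all add: M_def)
  obtain i0 j0 where M0: "M i0 j0 \<noteq> 0"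
  proof -
    have "\<not> (\<forall>i j. M i j = 0)"
    proof
      assume "\<forall>i j. M i j = 0"
      hence "\<sigma> = mat 1" by (simp add: vec_eq_iff mat_def M_def)
      thus False using sne by simp
    qed
    thus ?thesis using that by blast
  qed
  define c where "c = (\<chi> i. M i j0)"
  define S where "S = {k::nat. 0 < k \<and> (\<exists>y. int k = dotv y c)}"
  have cc: "0 < dotv c c"
  proof -
    have "c$i0 * c$i0 \<le> dotv c c" unfolding dotv_def
      by (rule member_le_sum) auto
    moreover have "0 < c$i0 * c$i0" using M0 by (auto simp add: c_def zero_less_mult_iff linorder_neq_iff)
    ultimately show ?thesis by linarith
  qed
  hence "nat (dotv c c) \<in> S" unfolding S_def by auto
  define d where "d = (LEAST k. k \<in> S)"
  have dS: "d \<in> S" unfolding d_def by (rule LeastI) fact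
  then obtain y0 where d0: "0 < d" and dy0: "int d = dotv y0 c" unfolding S_def by blast
  have dvd: "int d dvd c$i" for i
  proof -
    define q where "q = c$i div int d"
    have "dotv (\<chi> j. (if j = i then 1 else 0) - q * y0$j) c = (\<Sum>j\<in>UNIV. c$j * (if j = i then 1 else 0)) - q * dotv y0 c"
      unfolding dotv_def by (simp add: algebra_simps sum_subtractf sum_distrib_left)
    also have "\<dots> = c$i - q * int d" using dy0 by (simp add: sd1)
    also have "\<dots> = c$i mod int d" unfolding q_def by (simp add: minus_div_mult_eq_mod)
    finally have r: "dotv (\<chi> j. (if j = i then 1 else 0) - q * y0$j) c = c$i mod int d" .
    have "c$i mod int d = 0"
    proof (rule ccontr)
      assume "c$i mod int d \<noteq> 0"
      moreover have nn: "0 \<le> c$i mod int d" using d0 by simp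
      ultimately have "0 < nat (c$i mod int d) \<and> int (nat (c$i mod int d)) = dotv (\<chi> j. (if j = i then 1 else 0) - q * y0$j) c"
        using r by simp
      hence "nat (c$i mod int d) \<in> S" unfolding S_def by blast
      hence "d \<le> nat (c$i mod int d)" unfolding d_def by (rule Least_le)
      moreover have "c$i mod int d < int d" using d0 by simp
      ultimately show False using nn by linarith
    qed
    thus ?thesis by (simp add: dvd_eq_mod_eq_0)
  qed
  define p where "p = (\<chi> i. c$i div int d)"
  have cp: "c$i = int d * p$i" for i using dvd[of i] by (simp add: p_def)
  have "int d * dotv y0 p = int d" using dy0 unfolding dotv_def
    by (simp add: sum_distrib_left cp algebra_simps)
  hence yp: "dotv y0 p = 1" using d0 by simp
  have w0: "w$j0 \<noteq> 0" using Muw[of i0 j0] M0 by auto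
  define a where "a j = dotv y0 (\<chi> i. M i j)" for j
  have Mpa: "M i j = p$i * a j" for i j
  proof -
    define T where "T = rat_of_int (int d) * w$j / w$j0"
    have MT: "rat_of_int (M k j) = rat_of_int (p$k) * T" for k
    proof -
      have "rat_of_int (M k j) = u$k * w$j0 * (w$j / w$j0)" using Muw w0 by simp
      also have "u$k * w$j0 = rat_of_int (c$k)" using Muw[of k j0] by (simp add: c_def)
      finally show ?thesis by (simp add: cp T_def)
    qed
    have "rat_of_int (a j) = (\<Sum>k\<in>UNIV. rat_of_int (y0$k) * rat_of_int (M k j))"
      by (simp add: a_def dotv_def)
    also have "\<dots> = T * rat_of_int (dotv y0 p)"
      by (simp add: MT dotv_def sum_distrib_left algebra_simps)
    finally have "rat_of_int (a j) = T" using yp by simp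
    hence "rat_of_int (M i j) = rat_of_int (p$i * a j)" using MT by simp
    thus ?thesis by (simp only: of_int_eq_iff)
  qed
  define \<beta>0 where "\<beta>0 x = (\<Sum>j\<in>UNIV. a j * x$j)" for x :: "int^'n"
  have "strict_marking \<sigma> p \<beta>0"
    unfolding strict_marking_def
  proof (intro conjI allI)
    show "\<beta>0 (x + y) = \<beta>0 x + \<beta>0 y" for x y
      by (simp add: \<beta>0_def algebra_simps sum.distrib)
    show "\<sigma> *v x = x + \<beta>0 x *s p" for x
    proof -
      have "(\<sigma> *v x)$i = (x + \<beta>0 x *s p)$i" for i
      proof -
        have "\<sigma>$i$j = M i j + (if i = j then 1 else 0)" for j by (simp add: M_def)
        hence "(\<sigma> *v x)$i = (\<Sum>j\<in>UNIV. x$j * (if i = j then 1 else 0) + p$i * (a j * x$j))"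
          unfolding matrix_vector_mult_def by (simp add: Mpa algebra_simps)
        also have "\<dots> = x$i + p$i * \<beta>0 x"
          by (simp only: sum.distrib sd2 \<beta>0_def sum_distrib_left)
        finally show ?thesis by (simp add: mult.commute)
      qed
      thus ?thesis by (simp add: vec_eq_iff)
    qed
  qed
  thus ?thesis using yp by blast
qed



lemma tcls_eq: "(\<And>i. v$i - w$i \<in> \<int>) \<Longrightarrow> tcls v = tcls w"
proof -
  assume h: "\<And>i. v$i - w$i \<in> \<int>"
  have "(z$i - v$i \<in> \<int>) = (z$i - w$i \<in> \<int>)" for z i
  proof
    assume "z$i - v$i \<in> \<int>"
    hence "(z$i - v$i) + (v$i - w$i) \<in> \<int>" using h by (metis Ints_add)
    thus "z$i - w$i \<in> \<int>" by simp
  next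
    assume "z$i - w$i \<in> \<int>"
    hence "(z$i - w$i) - (v$i - w$i) \<in> \<int>" using h by (metis Ints_diff)
    thus "z$i - v$i \<in> \<int>" by simp
  qed
  thus ?thesis unfolding tcls_def by auto
qed

lemma tcls_eqD: "tcls v = tcls w \<Longrightarrow> v$i - w$i \<in> \<int>"
proof -
  assume "tcls v = tcls w"
  moreover have "v \<in> tcls v" by (simp add: tcls_def)
  ultimately show ?thesis by (simp add: tcls_def)
qed

lemma dot_real:
  assumes "dotv y p = 1" "\<And>i. s * real_of_int (p$i) \<in> \<int>"
  shows "s \<in> \<int>"
proof -
  have "s = s * real_of_int (dotv y p)" using assms(1) by simp
  also have "\<dots> = (\<Sum>i\<in>UNIV. real_of_int (y$i) * (s * real_of_int (p$i)))"
    by (simp add: dotv_def sum_distrib_left algebra_simps)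
  also have "\<dots> \<in> \<int>"
    apply (rule Ints_sum) apply (rule Ints_mult) using assms(2) by auto
  finally show ?thesis .
qed

lemma dot_vec:
  assumes "dotv y p = 1" "\<And>i. u$i = k * p$i"
  shows "dotv y u = k"
proof -
  have "dotv y u = k * dotv y p" unfolding dotv_def using assms(2)
    by (simp add: sum_distrib_left algebra_simps)
  thus ?thesis using assms(1) by simp
qed

lemma half_int: "real_of_int k / 2 \<in> \<int> \<Longrightarrow> even k"
proof -
  assume "real_of_int k / 2 \<in> \<int>"
  then obtain m where "real_of_int k / 2 = real_of_int m" by (auto elim: Ints_cases)
  hence "k = 2 * m" by linarith
  thus ?thesis by simp
qed

lemma same_b:
  assumes "strict_marking \<sigma> b \<beta>" "strict_marking \<sigma> b' \<beta>'" "b' = k *s b" "b$i \<noteq> 0"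
  shows "\<beta> x = k * \<beta>' x"
proof -
  have "(\<sigma> *v x)$i = x$i + \<beta> x * b$i" using assms(1) by (simp add: strict_marking_def)
  moreover have "(\<sigma> *v x)$i = x$i + \<beta>' x * (k * b$i)" using assms(2,3) by (simp add: strict_marking_def)
  ultimately have "\<beta> x * b$i = \<beta>' x * (k * b$i)" by linarith
  hence "\<beta> x * b$i = (k * \<beta>' x) * b$i" by (simp add: ac_simps)
  thus ?thesis using assms(4) by simp
qed

lemma marking_form:
  assumes ss: "\<sigma> ** \<sigma> = mat 1" and sne: "\<sigma> \<noteq> mat 1"
    and pm: "strict_marking \<sigma> p \<beta>0" and yp: "dotv y p = 1"
    and bm: "strict_marking \<sigma> b \<beta>"
  shows "\<exists>c. b = c *s p \<and> c \<in> {-2,-1,1,2}"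
proof -
  have sb: "\<sigma> *v b = - b" by (rule marking_basic[OF ss sne bm])
  have sp: "\<sigma> *v b = b + \<beta>0 b *s p" using pm by (simp add: strict_marking_def)
  have "(2 * b)$i = (- \<beta>0 b) * p$i" for i
  proof -
    have "(\<sigma> *v b)$i = - b$i" using sb by simp
    moreover have "(\<sigma> *v b)$i = b$i + \<beta>0 b * p$i" using sp by simp
    ultimately show ?thesis by simp
  qed
  hence "dotv y (2 * b) = - \<beta>0 b" using dot_vec[OF yp] by blast
  hence e1: "2 * dotv y b = - \<beta>0 b" by (simp add: dotv_def sum_distrib_left algebra_simps)
  define c where "c = dotv y b"
  have bc: "b$i = c * p$i" for i
  proof -
    have "(\<sigma> *v b)$i = - b$i" using sb by simp
    moreover have "(\<sigma> *v b)$i = b$i + \<beta>0 b * p$i" using sp by simp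
    ultimately have "2 * b$i = - \<beta>0 b * p$i" by simp
    also have "\<dots> = 2 * (c * p$i)" using e1 unfolding c_def by (metis mult.assoc)
    finally show ?thesis by simp
  qed
  hence bcp: "b = c *s p" by (simp add: vec_eq_iff)
  have p0: "p \<noteq> 0" using yp by (auto simp: dotv_def)
  then obtain i where pi: "p$i \<noteq> 0" by (metis vec_eq_iff zero_index)
  have "\<beta>0 x = c * \<beta> x" for x by (rule same_b[OF pm bm bcp pi])
  hence "\<beta>0 p = c * \<beta> p" .
  moreover have "\<beta>0 p = -2" by (rule marking_basic[OF ss sne pm])
  ultimately have "c dvd 2" by (metis dvd_minus_iff dvd_triv_left)
  hence "c \<noteq> 0" "\<bar>c\<bar> \<le> 2" using dvd_imp_le_int[of 2 c] by auto
  hence "c \<in> {-2,-1,1,2}" by auto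
  thus ?thesis using bcp by blast
qed



lemma ri_comp [simp]: "real_of_ivec b $ i = real_of_int (b$i)"
  by (simp add: real_of_ivec_def)

theorem lemma2p18:
  fixes \<sigma> :: "int^'n^'n"
  assumes "lat_reflection \<sigma>"
  shows "\<exists>f. bij_betw f {m. lat_marking \<sigma> m} {h. torus_marking \<sigma> h} \<and>
    (\<forall>b \<beta>. strict_marking \<sigma> b \<beta> \<longrightarrow>
       f {(b, \<beta>), (-b, \<lambda>x. - \<beta> x)} = tcls ((1/2) *s real_of_ivec b))"
proof -
  from refl_facts[OF assms] have ss: "\<sigma> ** \<sigma> = mat 1" and sne: "\<sigma> \<noteq> mat 1" by auto
  obtain p \<beta>0 y where pm: "strict_marking \<sigma> p \<beta>0" and yp: "dotv y p = 1"
    using ref_marking[OF assms] by blast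
  define f where "f m = tcls ((1/2) *s real_of_ivec (fst (SOME z. z \<in> m)))"
    for m :: "((int^'n) \<times> ((int^'n) \<Rightarrow> int)) set"
  have fval: "f {(b, \<beta>), (-b, \<lambda>x. - \<beta> x)} = tcls ((1/2) *s real_of_ivec b)" for b \<beta>
  proof -
    let ?m = "{(b, \<beta>), (-b, \<lambda>x. - \<beta> x)}"
    have "(SOME z. z \<in> ?m) \<in> ?m" by (rule someI_ex) blast
    hence "fst (SOME z. z \<in> ?m) = b \<or> fst (SOME z. z \<in> ?m) = -b" by auto
    moreover have "tcls ((1/2) *s real_of_ivec (-b)) = tcls ((1/2) *s real_of_ivec b)"
      by (rule tcls_eq) simp
    ultimately show ?thesis unfolding f_def by auto
  qed
  have hmark: "torus_marking \<sigma> (tcls ((1/2) *s real_of_ivec b))" if bm: "strict_marking \<sigma> b \<beta>" for b \<beta>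
  proof -
    define v where "v = (1/2) *s real_of_ivec b"
    have "real_of_ivec b \<in> real_of_ivec ` {z. \<sigma> *v z = - z}"
      using marking_basic(1)[OF ss sne bm] by blast
    hence "v \<in> span (real_of_ivec ` {z. \<sigma> *v z = - z})"
      unfolding v_def scalar_mult_eq_scaleR by (intro span_scale span_base)
    moreover have "\<forall>i. 2 * v$i \<in> \<int>" by (simp add: v_def)
    moreover have "\<not> trivial_mod2 \<sigma> \<longrightarrow> (\<exists>i. v$i \<notin> \<int>)"
    proof (rule ccontr)
      assume "\<not> (\<not> trivial_mod2 \<sigma> \<longrightarrow> (\<exists>i. v$i \<notin> \<int>))"
      hence nt: "\<not> trivial_mod2 \<sigma>" and vi: "\<forall>i. v$i \<in> \<int>" by auto
      have "trivial_mod2 \<sigma>" unfolding trivial_mod2_def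
      proof (intro allI impI)
        fix v' :: "real^'n" and i
        assume h: "\<forall>i. 2 * v'$i \<in> \<int>"
        have "(real_of_imat \<sigma> *v v')$i - v'$i
            = v$i * (\<Sum>j\<in>UNIV. real_of_int (\<beta> (axis j 1)) * (2 * v'$j))"
          by (simp add: sigma_mult_real[OF bm] v_def sum_distrib_left algebra_simps)
        also have "\<dots> \<in> \<int>"
          apply (rule Ints_mult) using vi apply blast
          apply (rule Ints_sum) apply (rule Ints_mult) using h by auto
        finally show "(real_of_imat \<sigma> *v v')$i - v'$i \<in> \<int>" .
      qed
      thus False using nt by simp
    qed
    ultimately show ?thesis unfolding torus_marking_def v_def by blast
  qed
  show ?thesis
  proof (intro exI conjI allI impI)
    show "f {(b, \<beta>), (-b, \<lambda>x. - \<beta> x)} = tcls ((1/2) *s real_of_ivec b)" for b \<beta> by (rule fval)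
    show "bij_betw f {m. lat_marking \<sigma> m} {h. torus_marking \<sigma> h}"
      unfolding bij_betw_def
    proof (intro conjI)
      show "inj_on f {m. lat_marking \<sigma> m}"
      proof (rule inj_onI)
        fix m1 m2 assume m1: "m1 \<in> {m. lat_marking \<sigma> m}" and m2: "m2 \<in> {m. lat_marking \<sigma> m}"
          and feq: "f m1 = f m2"
        from m1 obtain b \<beta> where bm: "strict_marking \<sigma> b \<beta>" and m1e: "m1 = {(b, \<beta>), (-b, \<lambda>x. - \<beta> x)}"
          unfolding lat_marking_def by blast
        from m2 obtain b' \<beta>' where bm': "strict_marking \<sigma> b' \<beta>'" and m2e: "m2 = {(b', \<beta>'), (-b', \<lambda>x. - \<beta>' x)}"
          unfolding lat_marking_def by blast
        obtain c where bc: "b = c *s p" and c: "c \<in> {-2,-1,1,2}" using marking_form[OF ss sne pm yp bm] by blast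
        obtain c' where bc': "b' = c' *s p" and c': "c' \<in> {-2,-1,1,2}" using marking_form[OF ss sne pm yp bm'] by blast
        have "tcls ((1/2) *s real_of_ivec b) = tcls ((1/2) *s real_of_ivec b')"
          using feq by (simp add: m1e m2e fval)
        hence "((1/2) *s real_of_ivec b)$i - ((1/2) *s real_of_ivec b')$i \<in> \<int>" for i by (rule tcls_eqD)
        moreover have "(real_of_int (c - c') / 2) * real_of_int (p$i) = ((1/2) *s real_of_ivec b)$i - ((1/2) *s real_of_ivec b')$i" for i
          by (simp add: bc bc' algebra_simps diff_divide_distrib)
        ultimately have "(real_of_int (c - c') / 2) * real_of_int (p$i) \<in> \<int>" for i
          by metis
        hence "real_of_int (c - c') / 2 \<in> \<int>" by (rule dot_real[OF yp])
        hence "even (c - c')" by (rule half_int)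
        hence disj: "c' = c \<or> c' = - c" using c c' by auto
        have p0: "p \<noteq> 0" using yp by (auto simp: dotv_def)
        then obtain i where pi: "p$i \<noteq> 0" by (metis vec_eq_iff zero_index)
        from disj show "m1 = m2"
        proof
          assume "c' = c"
          hence bb: "b' = 1 *s b" using bc bc' by simp
          have "c \<noteq> 0" using c by auto
          hence bi: "b$i \<noteq> 0" using pi bc by simp
          have "\<beta> x = 1 * \<beta>' x" for x by (rule same_b[OF bm bm' bb bi])
          hence "\<beta>' = \<beta>" by auto
          thus ?thesis using m1e m2e bb by simp
        next
          assume "c' = - c"
          hence bb: "b' = (-1) *s b" using bc bc' by (simp add: vec_eq_iff)
          have "c \<noteq> 0" using c by auto
          hence bi: "b$i \<noteq> 0" using pi bc by simp
          have "\<beta> x = (-1) * \<beta>' x" for x by (rule same_b[OF bm bm' bb bi])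
          hence "\<beta>' = (\<lambda>x. - \<beta> x)" by auto
          moreover have "b' = - b" using bb by (simp add: vec_eq_iff)
          ultimately show ?thesis using m1e m2e by auto
        qed
      qed
      show "f ` {m. lat_marking \<sigma> m} = {h. torus_marking \<sigma> h}"
      proof
        show "f ` {m. lat_marking \<sigma> m} \<subseteq> {h. torus_marking \<sigma> h}"
          using hmark fval unfolding lat_marking_def by auto
        show "{h. torus_marking \<sigma> h} \<subseteq> f ` {m. lat_marking \<sigma> m}"
        proof
          fix h assume "h \<in> {h. torus_marking \<sigma> h}"
          then obtain v where hv: "h = tcls v"
            and vspan: "v \<in> span (real_of_ivec ` {z. \<sigma> *v z = - z})"
            and v2: "\<forall>i. 2 * v$i \<in> \<int>"
            and vnt: "\<not> trivial_mod2 \<sigma> \<longrightarrow> (\<exists>i. v$i \<notin> \<int>)"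
            unfolding torus_marking_def by blast
          have "real_of_ivec ` {z. \<sigma> *v z = - z} \<subseteq> span {real_of_ivec p}"
          proof
            fix r assume "r \<in> real_of_ivec ` {z. \<sigma> *v z = - z}"
            then obtain z where rz: "r = real_of_ivec z" and sz: "\<sigma> *v z = - z" by blast
            have "real_of_int (z$i) = (- real_of_int (\<beta>0 z) / 2) * real_of_int (p$i)" for i
            proof -
              have "(\<sigma> *v z)$i = z$i + \<beta>0 z * p$i" using pm by (simp add: strict_marking_def)
              hence "2 * z$i + \<beta>0 z * p$i = 0" using sz by simp
              hence "real_of_int (2 * z$i + \<beta>0 z * p$i) = 0" by (simp only: of_int_0 of_int_eq_iff)
              hence "2 * real_of_int (z$i) + real_of_int (\<beta>0 z) * real_of_int (p$i) = 0" by simp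
              thus ?thesis by (simp add: field_simps)
            qed
            hence "r = (- real_of_int (\<beta>0 z) / 2) *\<^sub>R real_of_ivec p"
              unfolding rz by (simp add: vec_eq_iff)
            thus "r \<in> span {real_of_ivec p}" by (metis span_scale span_base singletonI)
          qed
          hence "span (real_of_ivec ` {z. \<sigma> *v z = - z}) \<subseteq> span {real_of_ivec p}"
            by (metis span_mono span_span)
          with vspan obtain s where vs: "v = s *\<^sub>R real_of_ivec p" unfolding span_singleton by blast
          have "(2 * s) * real_of_int (p$i) \<in> \<int>" for i using v2 vs by (simp add: algebra_simps)
          hence "2 * s \<in> \<int>" by (rule dot_real[OF yp])
          then obtain n where sn: "2 * s = real_of_int n" by (auto elim: Ints_cases)
          show "h \<in> f ` {m. lat_marking \<sigma> m}"
          proof (cases "even n")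
            case True
            then obtain k where nk: "n = 2 * k" by blast
            have vint: "v$i \<in> \<int>" for i
            proof -
              have "v$i = real_of_int (k * p$i)" using vs sn nk by simp
              thus ?thesis by simp
            qed
            hence triv: "trivial_mod2 \<sigma>" using vnt by blast
            have ev: "even (\<beta>0 x)" for x
            proof -
              define v' where "v' = (1/2) *s real_of_ivec x"
              have "\<forall>i. 2 * v'$i \<in> \<int>" by (simp add: v'_def)
              hence vv: "(real_of_imat \<sigma> *v v')$i - v'$i \<in> \<int>" for i using triv unfolding trivial_mod2_def by blast
              have p0: "p \<noteq> 0" using yp by (auto simp: dotv_def)
              then obtain i0 where pi: "p$i0 \<noteq> 0" by (metis vec_eq_iff zero_index)
              have bf: "\<beta>0 x = (\<Sum>j\<in>UNIV. \<beta>0 (axis j 1) * x$j)" by (rule beta_formula[OF pm pi])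
              have "(real_of_imat \<sigma> *v v')$i - v'$i = (real_of_int (\<beta>0 x) / 2) * real_of_int (p$i)" for i
                by (simp add: sigma_mult_real[OF pm] v'_def bf sum_divide_distrib algebra_simps)
              hence "(real_of_int (\<beta>0 x) / 2) * real_of_int (p$i) \<in> \<int>" for i using vv by metis
              hence "real_of_int (\<beta>0 x) / 2 \<in> \<int>" by (rule dot_real[OF yp])
              thus ?thesis by (rule half_int)
            qed
            define \<beta>1 where "\<beta>1 x = \<beta>0 x div 2" for x
            have m1: "strict_marking \<sigma> (2 *s p) \<beta>1"
              unfolding strict_marking_def
            proof (intro conjI allI)
              fix x1 x2
              have "\<beta>0 (x1 + x2) = \<beta>0 x1 + \<beta>0 x2" using pm by (simp add: strict_marking_def)
              thus "\<beta>1 (x1 + x2) = \<beta>1 x1 + \<beta>1 x2" unfolding \<beta>1_def using ev[of x1] ev[of x2] by auto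
            next
              fix x
              have "\<sigma> *v x = x + \<beta>0 x *s p" using pm by (simp add: strict_marking_def)
              moreover have "\<beta>0 x = \<beta>1 x * 2" unfolding \<beta>1_def using ev[of x] by simp
              ultimately show "\<sigma> *v x = x + \<beta>1 x *s (2 *s p)" by (simp add: vector_smult_assoc)
            qed
            have "f {(2 *s p, \<beta>1), (-(2 *s p), \<lambda>x. - \<beta>1 x)} = tcls ((1/2) *s real_of_ivec (2 *s p))"
              by (rule fval)
            also have "\<dots> = tcls v"
            proof (rule tcls_eq)
              fix i
              have "((1/2) *s real_of_ivec (2 *s p))$i - v$i = real_of_int ((1 - k) * p$i)"
                using vs sn nk by (simp add: algebra_simps)
              thus "((1/2) *s real_of_ivec (2 *s p))$i - v$i \<in> \<int>" by simp
            qed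
            finally show ?thesis using m1 hv unfolding lat_marking_def by blast
          next
            case False
            then obtain k where nk: "n = 2 * k + 1" by (metis oddE)
            have "f {(p, \<beta>0), (-p, \<lambda>x. - \<beta>0 x)} = tcls ((1/2) *s real_of_ivec p)"
              by (rule fval)
            also have "\<dots> = tcls v"
            proof (rule tcls_eq)
              fix i
              have sk: "s = real_of_int k + 1/2" using sn nk by simp
              have "((1/2) *s real_of_ivec p)$i - v$i = real_of_int ((- k) * p$i)"
                using vs sk by (simp add: algebra_simps)
              thus "((1/2) *s real_of_ivec p)$i - v$i \<in> \<int>" by simp
            qed
            finally show ?thesis using pm hv unfolding lat_marking_def by blast
          qed
        qed
      qed
    qed
  qed
qed


end
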